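(* For all $x$ with $|x|<1/4$, \[ \sum_{n=0}^\infty\binom{2n}{n}H_{2n+1}x^n=\frac1{\sqrt{1-4x}}\ln\Bigl(\frac{1+\sqrt{1-4x}}{2(1-4x)}\Bigr)+\frac{\arcsin(2\sqrt x)}{2\sqrt x}, \] \[ \sum_{n=0}^\infty(-1)^n\binom{2n}{n}H_{2n+1}x^n=\frac1{\sqrt{1+4x}}\ln\Bigl(\frac{1+\sqrt{1+4x}}{2(1+4x)}\Bigr)+\frac{\ln\bigl(2\sqrt x+\sqrt{1+4x}\bigr)}{2\sqrt x}. \]
   Context: $H_n=\sum_{j=1}^n\frac1j$ is the $n$th harmonic number. The functions $\frac{\arcsin(2\sqrt x)}{2\sqrt x}=\sum_{n\ge0}\binom{2n}{n}\frac{x^n}{2n+1}$ and $\frac{\ln(2\sqrt x+\sqrt{1+4x})}{2\sqrt x}=\sum_{n\ge0}(-1)^n\binom{2n}{n}\frac{x^n}{2n+1}$ are understood as these even analytic functions of $\sqrt x$ (principal branches for $x<0$, value $1$ at $x=0$). *)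

theory Defs
  imports "HOL-Analysis.Analysis"
begin

text \<open>The even analytic function of sqrt x that equals arcsin(2 sqrt x)/(2 sqrt x),
  with principal branches for x < 0 (where it becomes ln(2 sqrt(-x) + sqrt(1-4x))/(2 sqrt(-x)))
  and value 1 at x = 0.\<close>
definition asin_fun :: "real \<Rightarrow> real" where
  "asin_fun x =
     (if x > 0 then arcsin (2 * sqrt x) / (2 * sqrt x)
      else if x = 0 then 1
      else ln (2 * sqrt (-x) + sqrt (1 - 4 * x)) / (2 * sqrt (-x)))"

text \<open>The even analytic function of sqrt x that equals ln(2 sqrt x + sqrt(1+4x))/(2 sqrt x),
  with principal branches for x < 0 (where it becomes arcsin(2 sqrt(-x))/(2 sqrt(-x)))
  and value 1 at x = 0.\<close>
definition asinh_fun :: "real \<Rightarrow> real" where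
  "asinh_fun x =
     (if x > 0 then ln (2 * sqrt x + sqrt (1 + 4 * x)) / (2 * sqrt x)
      else if x = 0 then 1
      else arcsin (2 * sqrt (-x)) / (2 * sqrt (-x)))"

end

theory Submission
  imports Defs
begin

definition good :: "(nat \<Rightarrow> real) \<Rightarrow> bool" where
  "good a \<longleftrightarrow> (\<forall>r. \<bar>r\<bar> < 1/4 \<longrightarrow> summable (\<lambda>n. a n * r ^ n))"

lemma good_diffs: "good a \<Longrightarrow> good (diffs a)"
  unfolding good_def using termdiff_converges[of _ "1/4" a] by auto

lemma good_deriv: "good a \<Longrightarrow> \<bar>x\<bar> < 1/4 \<Longrightarrow>
   ((\<lambda>x. \<Sum>n. a n * x^n) has_field_derivative (\<Sum>n. diffs a n * x^n)) (at x)"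
  by (rule termdiffs_strong'[of "1/4"]) (auto simp: good_def)

lemma good_sums: "good a \<Longrightarrow> \<bar>x\<bar> < 1/4 \<Longrightarrow> (\<lambda>n. a n * x^n) sums (\<Sum>n. a n * x^n)"
  unfolding good_def by (simp add: summable_sums)

lemma xderiv: assumes "good a" "\<bar>x\<bar> < 1/4"
  shows "(\<lambda>n. real n * a n * x^n) sums (x * (\<Sum>n. diffs a n * x^n))"
proof -
  have "(\<lambda>n. diffs a n * x^n) sums (\<Sum>n. diffs a n * x^n)"
    using good_sums[OF good_diffs[OF assms(1)] assms(2)] .
  hence "(\<lambda>n. x * (diffs a n * x^n)) sums (x * (\<Sum>n. diffs a n * x^n))"
    by (rule sums_mult)
  hence "(\<lambda>n. real (Suc n) * a (Suc n) * x^(Suc n)) sums (x * (\<Sum>n. diffs a n * x^n))"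
    by (simp add: diffs_def algebra_simps)
  thus ?thesis by (subst (asm) sums_Suc_iff) simp
qed

lemma good_bound:
  assumes "\<And>n. \<bar>a n\<bar> \<le> M * (real n + 1) * 4 ^ n"
  shows "good a"
  unfolding good_def
proof (intro allI impI)
  fix r :: real assume r: "\<bar>r\<bar> < 1/4"
  have "summable (\<lambda>n. diffs (\<lambda>_. 1::real) n * \<bar>4*r\<bar> ^ n)"
    by (rule termdiff_converges[of _ 1]) (use r in auto)
  hence s: "summable (\<lambda>n. M * ((real n + 1) * \<bar>4*r\<bar> ^ n))"
    by (intro summable_mult) (simp add: diffs_def add.commute)
  show "summable (\<lambda>n. a n * r ^ n)"
  proof (rule summable_comparison_test'[OF s])
    fix n
    have "norm (a n * r ^ n) = \<bar>a n\<bar> * \<bar>r\<bar>^n" by (simp add: abs_mult power_abs)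
    also have "\<dots> \<le> M * (real n + 1) * 4 ^ n * \<bar>r\<bar>^n"
      by (intro mult_right_mono assms) auto
    also have "\<dots> = M * ((real n + 1) * \<bar>4*r\<bar> ^ n)"
      by (simp add: abs_mult power_mult_distrib)
    finally show "norm (a n * r ^ n) \<le> M * ((real n + 1) * \<bar>4*r\<bar> ^ n)" .
  qed
qed

lemma harm_le: "harm n \<le> (real n :: real)"
proof (induction n)
  case 0 then show ?case by (simp add: harm_def)
next
  case (Suc n)
  have "inverse (real (Suc n)) \<le> 1" by (simp add: field_simps)
  then show ?case using Suc by (simp add: harm_Suc)
qed

lemma central_rec: "Suc n * ((2 * Suc n) choose Suc n) = 2 * ((2*n+1) * ((2*n) choose n))"
proof -
  have e1: "Suc (2*n+1) * ((2*n+1) choose n) = ((Suc (2*n+1)) choose Suc n) * Suc n"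
    by (rule Suc_times_binomial_eq)
  have e2: "((2*n+1) - n) * ((2*n+1) choose n) = (2*n+1) * (((2*n+1) - 1) choose n)"
    by (rule binomial_absorb_comp)
  have e2': "((2*n+1) choose n) * Suc n = (2*n+1) * ((2*n) choose n)"
  proof -
    have h1: "(2*n+1) - n = Suc n" "(2*n+1) - 1 = 2*n" by auto
    show ?thesis using e2 unfolding h1 by (metis mult.commute)
  qed
  have "Suc n * ((2 * Suc n) choose Suc n) * Suc n = (2 * Suc n) * ((2*n+1) choose n) * Suc n"
  proof -
    have h: "2 * Suc n = Suc (2*n+1)" by simp
    have "Suc n * ((2 * Suc n) choose Suc n) * Suc n = Suc n * (((Suc (2*n+1)) choose Suc n) * Suc n)"
      unfolding h by (simp only: mult.assoc)
    also have "\<dots> = Suc n * (Suc (2*n+1) * ((2*n+1) choose n))" using e1 by simp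
    also have "\<dots> = (2 * Suc n) * ((2*n+1) choose n) * Suc n" unfolding h by simp
    finally show ?thesis .
  qed
  also have "\<dots> = 2 * (((2*n+1) choose n) * Suc n) * Suc n" by (simp only: mult.assoc mult.left_commute mult.commute)
  also have "\<dots> = 2 * ((2*n+1) * ((2*n) choose n)) * Suc n"
    unfolding e2' ..
  finally show ?thesis
    using mult_right_cancel[of "Suc n" "Suc n * ((2 * Suc n) choose Suc n)" "2 * ((2*n+1) * ((2*n) choose n))"]
    Suc_not_Zero by blast
qed

definition cc :: "nat \<Rightarrow> real" where "cc n = real ((2*n) choose n)"

lemma cc_rec: "real (Suc n) * cc (Suc n) = (4 * real n + 2) * cc n"
proof -
  have "real (Suc n * ((2 * Suc n) choose Suc n)) = real (2 * ((2*n+1) * ((2*n) choose n)))"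
    using central_rec by presburger
  thus ?thesis unfolding cc_def by (simp only: of_nat_mult) (simp add: algebra_simps)
qed

lemma cc_bound: "cc n \<le> 4 ^ n" "cc n \<ge> 0"
proof -
  have "(2*n) choose n \<le> 2^(2*n)" by (rule binomial_le_pow2)
  hence "real ((2*n) choose n) \<le> real (2^(2*n))" by linarith
  also have "\<dots> = 4 ^ n" by (simp add: power_mult)
  finally show "cc n \<le> 4 ^ n" by (simp add: cc_def)
qed (simp add: cc_def)

lemma good_cc: "good cc"
proof (rule good_bound[of _ 1])
  fix n
  have "0 \<le> real n * 4^n" by simp
  thus "\<bar>cc n\<bar> \<le> 1 * (real n + 1) * 4 ^ n" using cc_bound[of n] by (simp add: algebra_simps, linarith)
qed

lemma ode_series: assumes "good a" "\<bar>x\<bar> < 1/4"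
  shows "(\<lambda>n. (diffs a n - 4 * real n * a n - 2 * a n) * x^n) sums
          ((1 - 4*x) * (\<Sum>n. diffs a n * x^n) - 2 * (\<Sum>n. a n * x^n))"
proof -
  have s1: "(\<lambda>n. diffs a n * x^n) sums (\<Sum>n. diffs a n * x^n)"
    using good_sums[OF good_diffs[OF assms(1)] assms(2)] .
  have s2: "(\<lambda>n. 4 * (real n * a n * x^n)) sums (4 * (x * (\<Sum>n. diffs a n * x^n)))"
    using sums_mult[OF xderiv[OF assms]] .
  have s3: "(\<lambda>n. 2 * (a n * x^n)) sums (2 * (\<Sum>n. a n * x^n))"
    using sums_mult[OF good_sums[OF assms]] .
  have "(\<lambda>n. diffs a n * x^n - 4 * (real n * a n * x^n) - 2 * (a n * x^n)) sums
     ((\<Sum>n. diffs a n * x^n) - 4 * (x * (\<Sum>n. diffs a n * x^n)) - 2 * (\<Sum>n. a n * x^n))"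
    by (intro sums_diff s1 s2 s3)
  thus ?thesis by (simp add: algebra_simps)
qed

lemma ode_unique:
  fixes y Y y' Y' :: "real \<Rightarrow> real"
  assumes dy: "\<And>t. \<bar>t\<bar> < 1/4 \<Longrightarrow> (y has_field_derivative y' t) (at t)"
    and dY: "\<And>t. \<bar>t\<bar> < 1/4 \<Longrightarrow> (Y has_field_derivative Y' t) (at t)"
    and eq: "\<And>t. \<bar>t\<bar> < 1/4 \<Longrightarrow> (1 - 4*t) * y' t - 2 * y t = (1 - 4*t) * Y' t - 2 * Y t"
    and y0: "y 0 = Y 0" and x: "\<bar>x\<bar> < 1/4"
  shows "y x = Y x"
proof -
  define D where "D t = sqrt (1 - 4*t) * (y t - Y t)" for t
  have "\<exists>c. \<forall>t\<in>{-1/4<..<1/4}. D t = c"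
  proof (rule has_field_derivative_zero_constant)
    fix t :: real assume "t \<in> {-1/4<..<1/4}"
    hence t: "\<bar>t\<bar> < 1/4" by auto
    have pos: "1 - 4*t > 0" using t by auto
    have "(D has_field_derivative
        (-4 / (2 * sqrt (1 - 4*t))) * (y t - Y t) + sqrt (1 - 4*t) * (y' t - Y' t)) (at t)"
      unfolding D_def using pos
      by (auto intro!: derivative_eq_intros dy[OF t] dY[OF t] simp: inverse_eq_divide field_simps)
    also have "(-4 / (2 * sqrt (1 - 4*t))) * (y t - Y t) + sqrt (1 - 4*t) * (y' t - Y' t)
       = ((1 - 4*t) * y' t - 2 * y t - ((1 - 4*t) * Y' t - 2 * Y t)) / sqrt (1 - 4*t)"
      using pos by (simp add: field_simps inverse_eq_divide)
    also have "\<dots> = 0" using eq[OF t] by simp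
    finally show "(D has_field_derivative 0) (at t within {-1/4<..<1/4})"
      by (rule has_field_derivative_at_within)
  qed simp
  then obtain c where c: "\<And>t. t \<in> {-1/4<..<1/4} \<Longrightarrow> D t = c" by blast
  have "x \<in> {-1/4<..<1/4}" using x by auto
  hence "D x = D 0" using c[of x] c[of 0] by auto
  also have "D 0 = 0" using y0 by (simp add: D_def)
  finally have "sqrt (1 - 4*x) * (y x - Y x) = 0" by (simp add: D_def)
  moreover have "sqrt (1 - 4*x) > 0" using x by auto
  ultimately show ?thesis by simp
qed

lemma Cs_closed: assumes "\<bar>x\<bar> < 1/4" shows "(\<Sum>n. cc n * x^n) = 1 / sqrt (1 - 4*x)"
proof (rule ode_unique[where y' = "\<lambda>t. \<Sum>n. diffs cc n * t^n"
      and Y' = "\<lambda>t. 2 / ((1 - 4*t) * sqrt (1 - 4*t))", OF _ _ _ _ assms])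
  fix t :: real assume t: "\<bar>t\<bar> < 1/4"
  show "((\<lambda>x. \<Sum>n. cc n * x^n) has_field_derivative (\<Sum>n. diffs cc n * t^n)) (at t)"
    by (rule good_deriv[OF good_cc t])
  have pos: "1 - 4*t > 0" using t by auto
  show "((\<lambda>t. 1 / sqrt (1 - 4*t)) has_field_derivative 2 / ((1 - 4*t) * sqrt (1 - 4*t))) (at t)"
    using pos by (auto intro!: derivative_eq_intros simp: field_simps)
  have "(\<lambda>n. (diffs cc n - 4 * real n * cc n - 2 * cc n) * t^n) sums
          ((1 - 4*t) * (\<Sum>n. diffs cc n * t^n) - 2 * (\<Sum>n. cc n * t^n))"
    by (rule ode_series[OF good_cc t])
  moreover have "(\<lambda>n. (diffs cc n - 4 * real n * cc n - 2 * cc n) * t^n) = (\<lambda>n. 0)"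
  proof (rule ext)
    fix n
    have "diffs cc n - 4 * real n * cc n - 2 * cc n = 0"
      using cc_rec[of n] unfolding diffs_def by (simp add: algebra_simps)
    thus "(diffs cc n - 4 * real n * cc n - 2 * cc n) * t^n = 0" by simp
  qed
  ultimately have "(1 - 4*t) * (\<Sum>n. diffs cc n * t^n) - 2 * (\<Sum>n. cc n * t^n) = 0"
    using sums_unique2 sums_zero by metis
  moreover have "(1 - 4*t) * (2 / ((1 - 4*t) * sqrt (1 - 4*t))) - 2 * (1 / sqrt (1 - 4*t)) = 0"
    using pos by (simp add: field_simps)
  ultimately show "(1 - 4*t) * (\<Sum>n. diffs cc n * t^n) - 2 * (\<Sum>n. cc n * t^n) =
     (1 - 4*t) * (2 / ((1 - 4*t) * sqrt (1 - 4*t))) - 2 * (1 / sqrt (1 - 4*t))" by simp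
next
  show "(\<Sum>n. cc n * 0^n) = 1 / sqrt (1 - 4*0)" by (simp add: cc_def)
qed

definition aa :: "nat \<Rightarrow> real" where "aa n = cc n * harm (2*n)"
definition ee :: "nat \<Rightarrow> real" where "ee n = cc (Suc n) / 2"

lemma good_aa: "good aa"
proof (rule good_bound[of _ 2])
  fix n
  have "\<bar>aa n\<bar> = cc n * harm (2*n)" using cc_bound[of n] harm_nonneg[of "2*n", where 'a=real]
    by (simp add: aa_def)
  also have "\<dots> \<le> 4^n * (2 * (real n + 1))"
    using harm_le[of "2*n"] cc_bound[of n] harm_nonneg[of "2*n", where 'a=real]
    by (intro mult_mono) auto
  finally show "\<bar>aa n\<bar> \<le> 2 * (real n + 1) * 4 ^ n" by (simp add: algebra_simps)
qed

lemma good_ee: "good ee"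
proof (rule good_bound[of _ 2])
  fix n
  have "\<bar>ee n\<bar> = cc (Suc n) / 2" using cc_bound[of "Suc n"] by (simp add: ee_def)
  also have "\<dots> \<le> 4^(Suc n) / 2" using cc_bound[of "Suc n"] by simp
  also have "\<dots> \<le> 2 * (real n + 1) * 4 ^ n" by simp
  finally show "\<bar>ee n\<bar> \<le> 2 * (real n + 1) * 4 ^ n" .
qed

lemma aa_coeff: "diffs aa n - 4 * real n * aa n - 2 * aa n = 2 * cc n + ee n"
proof -
  have h: "harm (2 * Suc n) = harm (2*n) + 1 / (2 * real n + 1) + 1 / (2 * real n + 2)"
  proof -
    have "2 * Suc n = Suc (Suc (2*n))" by simp
    thus ?thesis by (simp add: harm_Suc inverse_eq_divide algebra_simps)
  qed
  have r: "real (Suc n) * cc (Suc n) = (4 * real n + 2) * cc n" by (rule cc_rec)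
  have "diffs aa n = real (Suc n) * cc (Suc n) * harm (2 * Suc n)"
    by (simp add: diffs_def aa_def)
  also have "\<dots> = real (Suc n) * cc (Suc n) * harm (2*n) + real (Suc n) * cc (Suc n) * (1 / (2 * real n + 1))
      + real (Suc n) * cc (Suc n) * (1 / (2 * real n + 2))"
    unfolding h by (simp only: distrib_left)
  also have "\<dots> = (4 * real n + 2) * cc n * harm (2*n) + (4 * real n + 2) * cc n / (2 * real n + 1)
      + real (Suc n) * cc (Suc n) / (2 * real n + 2)"
    unfolding r by simp
  also have "(4 * real n + 2) * cc n / (2 * real n + 1) = 2 * cc n"
    by (simp add: field_simps)
  also have "real (Suc n) * cc (Suc n) / (2 * real n + 2) = ee n"
    by (simp add: ee_def field_simps)
  finally show ?thesis by (simp add: aa_def[of n] algebra_simps)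
qed

lemma Es_closed: assumes x: "\<bar>x\<bar> < 1/4"
  shows "(\<Sum>n. ee n * x^n) = 2 / (sqrt (1 - 4*x) * (1 + sqrt (1 - 4*x)))"
proof (cases "x = 0")
  case True
  have "(\<Sum>n. ee n * x^n) = ee 0" unfolding True by (rule powser_zero)
  also have "ee 0 = 1" by (simp add: ee_def cc_def)
  finally show ?thesis using True by simp
next
  case False
  define s where "s = sqrt (1 - 4*x)"
  have s0: "s > 0" using x by (auto simp: s_def)
  have ss: "s^2 = 1 - 4*x" using x by (simp add: s_def)
  have "(\<lambda>n. cc (Suc n) * x^(Suc n)) sums ((\<Sum>n. cc n * x^n) - cc 0 * x^0)"
    using good_sums[OF good_cc x] by (subst sums_Suc_iff) simp
  hence "(\<lambda>n. cc (Suc n) * x^(Suc n)) sums (1/s - 1)"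
    using Cs_closed[OF x] by (simp add: s_def cc_def)
  hence "(\<lambda>n. (2*x) * (ee n * x^n)) sums (1/s - 1)"
    by (simp add: ee_def algebra_simps)
  moreover have "(\<lambda>n. (2*x) * (ee n * x^n)) sums ((2*x) * (\<Sum>n. ee n * x^n))"
    by (intro sums_mult good_sums[OF good_ee x])
  ultimately have "(2*x) * (\<Sum>n. ee n * x^n) = 1/s - 1" using sums_unique2 by blast
  hence "(\<Sum>n. ee n * x^n) = (1/s - 1) / (2 * x)" using False by (simp add: field_simps)
  also have "\<dots> = 2 / (s * (1 + s))"
  proof -
    have "x = (1 - s^2)/4" using ss by simp
    hence x2: "2 * x = (1 - s^2) / 2" by simp
    have "(1/s - 1) / (2 * x) = (1/s - 1) / ((1 - s^2) / 2)" by (simp only: x2)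
    also have "\<dots> = (1/s - 1) * 2 / (1 - s^2)" by (simp only: divide_divide_eq_right)
    also have "1 - s^2 = (1 - s) * (1 + s)" by (simp add: power2_eq_square algebra_simps)
    also have "(1/s - 1) * 2 / ((1 - s) * (1 + s)) = 2 / (s * (1 + s))"
    proof -
      have "s \<noteq> 1" using False ss by auto
      hence "1 - s \<noteq> 0" "1 + s \<noteq> 0" "s \<noteq> 0" using s0 by auto
      have "(1/s - 1) = (1 - s) / s" using s0 by (simp add: field_simps)
      hence "(1/s - 1) * 2 / ((1 - s) * (1 + s)) = ((1 - s) * 2) / ((1 - s) * (s * (1 + s)))"
        by (simp add: ac_simps)
      also have "\<dots> = 2 / (s * (1 + s))" using \<open>1 - s \<noteq> 0\<close> by (rule mult_divide_mult_cancel_left)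
      finally show ?thesis .
    qed
    finally show ?thesis .
  qed
  finally show ?thesis by (simp add: s_def)
qed

lemma alg1: fixes s t :: real assumes s: "s > 0" and st: "s * s = 1 - 4*t"
  shows "(- (2 * inverse s * (2 - 8 * t)) - (- 8 - s * 8)) / ((1 + s) * (2 - 8 * t)) =
     4 / (1 - 4 * t) - 2 / (s * (1 + s))"
proof -
  have a: "2 - 8 * t = 2 * (s * s)" "1 - 4 * t = s * s" using st by simp_all
  have "1 + s \<noteq> 0" "s \<noteq> 0" using s by auto
  thus ?thesis unfolding a by (simp add: divide_simps inverse_eq_divide) (simp add: algebra_simps)?
qed

definition GG :: "real \<Rightarrow> real" where
  "GG t = 1 / sqrt (1 - 4*t) * ln ((1 + sqrt (1 - 4*t)) / (2 * (1 - 4*t)))"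

lemma GG_deriv: assumes t: "\<bar>t\<bar> < 1/4"
  shows "(GG has_field_derivative
    (2 / ((1 - 4*t) * sqrt (1 - 4*t)) * ln ((1 + sqrt (1 - 4*t)) / (2 * (1 - 4*t))) +
     (4 / (1 - 4*t) - 2 / (sqrt (1 - 4*t) * (1 + sqrt (1 - 4*t)))) * (1 / sqrt (1 - 4*t)))) (at t)"
proof -
  have pos: "1 - 4*t > 0" using t by auto
  have sp: "sqrt (1 - 4*t) > 0" using pos by simp
  have ss: "sqrt (1 - 4*t) * sqrt (1 - 4*t) = 1 - 4*t" using pos by simp
  have L: "((\<lambda>t. ln ((1 + sqrt (1 - 4*t)) / (2 * (1 - 4*t)))) has_field_derivative
      (4 / (1 - 4*t) - 2 / (sqrt (1 - 4*t) * (1 + sqrt (1 - 4*t))))) (at t)"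
    using pos sp
    apply (auto intro!: derivative_eq_intros)
    subgoal by (intro divide_pos_pos) (auto simp: add_pos_nonneg)
    subgoal using alg1[OF sp ss] by simp
    done
  have S: "((\<lambda>t. 1 / sqrt (1 - 4*t)) has_field_derivative 2 / ((1 - 4*t) * sqrt (1 - 4*t))) (at t)"
    using pos by (auto intro!: derivative_eq_intros simp: field_simps)
  show ?thesis unfolding GG_def
    by (rule DERIV_mult[OF S L])
qed

lemma alg2: fixes s t l :: real assumes s: "s > 0" and st: "s * s = 1 - 4*t"
  shows "(1 - 4*t) * (2 / ((1 - 4*t) * s) * l + (4 / (1 - 4*t) - 2 / (s * (1 + s))) * (1 / s))
     - 2 * (1 / s * l) = 2 * (1 / s) + 2 / (s * (1 + s))"
proof -
  have a: "1 - 4 * t = s * s" using st by simp_all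
  have "1 + s \<noteq> 0" "s \<noteq> 0" using s by auto
  thus ?thesis unfolding a by (simp add: divide_simps) (simp add: algebra_simps)?
qed

lemma Gs_closed: assumes x: "\<bar>x\<bar> < 1/4" shows "(\<Sum>n. aa n * x^n) = GG x"
proof (rule ode_unique[where y' = "\<lambda>t. \<Sum>n. diffs aa n * t^n"
      and Y' = "\<lambda>t. 2 / ((1 - 4*t) * sqrt (1 - 4*t)) * ln ((1 + sqrt (1 - 4*t)) / (2 * (1 - 4*t))) +
     (4 / (1 - 4*t) - 2 / (sqrt (1 - 4*t) * (1 + sqrt (1 - 4*t)))) * (1 / sqrt (1 - 4*t))", OF _ _ _ _ x])
  fix t :: real assume t: "\<bar>t\<bar> < 1/4"
  show "((\<lambda>x. \<Sum>n. aa n * x^n) has_field_derivative (\<Sum>n. diffs aa n * t^n)) (at t)"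
    by (rule good_deriv[OF good_aa t])
  show "(GG has_field_derivative (2 / ((1 - 4*t) * sqrt (1 - 4*t)) * ln ((1 + sqrt (1 - 4*t)) / (2 * (1 - 4*t))) +
     (4 / (1 - 4*t) - 2 / (sqrt (1 - 4*t) * (1 + sqrt (1 - 4*t)))) * (1 / sqrt (1 - 4*t)))) (at t)"
    by (rule GG_deriv[OF t])
  have pos: "1 - 4*t > 0" using t by auto
  have sp: "sqrt (1 - 4*t) > 0" using pos by simp
  have ss: "sqrt (1 - 4*t) * sqrt (1 - 4*t) = 1 - 4*t" using pos by simp
  have s1: "(\<lambda>n. (diffs aa n - 4 * real n * aa n - 2 * aa n) * t^n) sums
          ((1 - 4*t) * (\<Sum>n. diffs aa n * t^n) - 2 * (\<Sum>n. aa n * t^n))"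
    by (rule ode_series[OF good_aa t])
  have s2: "(\<lambda>n. (diffs aa n - 4 * real n * aa n - 2 * aa n) * t^n) sums
      (2 * (\<Sum>n. cc n * t^n) + (\<Sum>n. ee n * t^n))"
  proof -
    have "(\<lambda>n. 2 * (cc n * t^n) + ee n * t^n) sums (2 * (\<Sum>n. cc n * t^n) + (\<Sum>n. ee n * t^n))"
      by (intro sums_add sums_mult good_sums[OF good_cc t] good_sums[OF good_ee t])
    thus ?thesis unfolding aa_coeff by (simp add: algebra_simps)
  qed
  have "(1 - 4*t) * (\<Sum>n. diffs aa n * t^n) - 2 * (\<Sum>n. aa n * t^n) =
      2 * (1 / sqrt (1 - 4*t)) + 2 / (sqrt (1 - 4*t) * (1 + sqrt (1 - 4*t)))"
    by (simp only: sums_unique2[OF s1 s2] Cs_closed[OF t] Es_closed[OF t])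
  thus "(1 - 4*t) * (\<Sum>n. diffs aa n * t^n) - 2 * (\<Sum>n. aa n * t^n) =
     (1 - 4*t) * (2 / ((1 - 4*t) * sqrt (1 - 4*t)) * ln ((1 + sqrt (1 - 4*t)) / (2 * (1 - 4*t))) +
     (4 / (1 - 4*t) - 2 / (sqrt (1 - 4*t) * (1 + sqrt (1 - 4*t)))) * (1 / sqrt (1 - 4*t))) - 2 * GG t"
    unfolding GG_def using alg2[OF sp ss] by simp
next
  have "(\<Sum>n. aa n * 0^n) = aa 0" by (rule powser_zero)
  thus "(\<Sum>n. aa n * 0^n) = GG 0" by (simp add: aa_def GG_def harm_def)
qed

definition dd :: "nat \<Rightarrow> real" where "dd n = cc n / (2 * real n + 1)"

lemma good_dd: "good dd"
proof (rule good_bound[of _ 1])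
  fix n
  have "\<bar>dd n\<bar> = cc n / (2 * real n + 1)" using cc_bound[of n] by (simp add: dd_def)
  also have "\<dots> \<le> cc n" using cc_bound[of n] by (simp add: divide_le_eq) (simp add: algebra_simps)?
  also have "\<dots> \<le> 4^n" using cc_bound[of n] by simp
  also have "\<dots> \<le> 1 * (real n + 1) * 4 ^ n" by simp
  finally show "\<bar>dd n\<bar> \<le> 1 * (real n + 1) * 4 ^ n" .
qed

lemma Ss_ode: assumes t: "\<bar>t\<bar> < 1/4"
  shows "2 * t * (\<Sum>n. diffs dd n * t^n) + (\<Sum>n. dd n * t^n) = 1 / sqrt (1 - 4*t)"
proof -
  have "(\<lambda>n. 2 * (real n * dd n * t^n) + dd n * t^n) sums
      (2 * (t * (\<Sum>n. diffs dd n * t^n)) + (\<Sum>n. dd n * t^n))"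
    by (intro sums_add sums_mult xderiv[OF good_dd t] good_sums[OF good_dd t])
  moreover have "(\<lambda>n. 2 * (real n * dd n * t^n) + dd n * t^n) = (\<lambda>n. cc n * t^n)"
  proof (rule ext)
    fix n
    have "2 * real n * dd n + dd n = cc n"
    proof -
      have h: "2 * real n + 1 > 0" by simp
      have "2 * real n * dd n + dd n = (2 * real n + 1) * dd n" by (simp add: algebra_simps)
      also have "\<dots> = cc n" unfolding dd_def using h by simp
      finally show ?thesis .
    qed
    hence "(2 * real n * dd n + dd n) * t^n = cc n * t^n" by simp
    thus "2 * (real n * dd n * t^n) + dd n * t^n = cc n * t^n" by (simp only: algebra_simps)
  qed
  ultimately show ?thesis using good_sums[OF good_cc t] Cs_closed[OF t] sums_unique2
    by (metis mult.assoc)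
qed

lemma Ss_cont: assumes "\<bar>t\<bar> < 1/4" shows "isCont (\<lambda>x. \<Sum>n. dd n * x^n) t"
  using good_deriv[OF good_dd assms] by (rule DERIV_isCont)

lemma Ss_cont_on: assumes "{a..b} \<subseteq> {-1/4<..<1/4}" shows "continuous_on {a..b} (\<lambda>x. \<Sum>n. dd n * x^n)"
proof (rule continuous_at_imp_continuous_on, rule ballI)
  fix x assume "x \<in> {a..b}"
  hence "x \<in> {-1/4<..<1/4}" using assms by blast
  hence "\<bar>x\<bar> < 1/4" by auto
  thus "isCont (\<lambda>x. \<Sum>n. dd n * x^n) x" by (rule Ss_cont)
qed

lemma Ss_pos: assumes x: "0 < x" "x < 1/4"
  shows "(\<Sum>n. dd n * x^n) = arcsin (2 * sqrt x) / (2 * sqrt x)"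
proof -
  define Ss where "Ss t = (\<Sum>n. dd n * t^n)" for t
  define D where "D t = sqrt t * Ss t - arcsin (2 * sqrt t) / 2" for t
  have "D x = D 0"
  proof (rule DERIV_isconst_end[OF x(1)])
    have sub: "{0..x} \<subseteq> {-1/4<..<1/4}" using x by auto
    have c1: "continuous_on {0..x} Ss" unfolding Ss_def by (rule Ss_cont_on[OF sub])
    have b: "\<forall>t\<in>{0..x}. -1 \<le> 2 * sqrt t \<and> 2 * sqrt t \<le> 1"
    proof
      fix t assume "t \<in> {0..x}"
      hence "0 \<le> t" "t \<le> 1/4" using x by auto
      hence "sqrt t \<le> sqrt (1/4)" by (intro real_sqrt_le_mono)
      also have "sqrt (1/4) = (1/2::real)" by (simp add: real_sqrt_divide)
      finally have "sqrt t \<le> 1/2" .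
      thus "-1 \<le> 2 * sqrt t \<and> 2 * sqrt t \<le> 1" using real_sqrt_ge_zero[OF \<open>0 \<le> t\<close>] by linarith
    qed
    show "continuous_on {0..x} D" unfolding D_def
      by (intro continuous_intros c1 b) auto
  next
    fix t assume t: "0 < t" "t < x"
    have ta: "\<bar>t\<bar> < 1/4" using t x by auto
    have pos: "1 - 4*t > 0" using ta by auto
    have st: "sqrt t > 0" using t by simp
    have st2: "sqrt t * sqrt t = t" using t by simp
    have lt1: "2 * sqrt t < 1"
    proof -
      have "sqrt t < sqrt (1/4)" using t x by (intro real_sqrt_less_mono) auto
      also have "sqrt (1/4) = (1/2::real)" by (simp add: real_sqrt_divide)
      finally show ?thesis by auto
    qed
    have gt1: "-1 < 2 * sqrt t" using st by linarith
    have dS: "(Ss has_field_derivative (\<Sum>n. diffs dd n * t^n)) (at t)"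
      unfolding Ss_def by (rule good_deriv[OF good_dd ta])
    have ode: "2 * t * (\<Sum>n. diffs dd n * t^n) + Ss t = 1 / sqrt (1 - 4*t)"
      using Ss_ode[OF ta] by (simp add: Ss_def)
    have "(D has_field_derivative
       (inverse (sqrt t) / 2 * Ss t + sqrt t * (\<Sum>n. diffs dd n * t^n)
        - inverse (sqrt (1 - (2 * sqrt t)\<^sup>2)) * (2 * (inverse (sqrt t) / 2)) / 2)) (at t)"
      unfolding D_def using t lt1 gt1
      by (auto intro!: derivative_eq_intros dS)
    also have "inverse (sqrt t) / 2 * Ss t + sqrt t * (\<Sum>n. diffs dd n * t^n)
        - inverse (sqrt (1 - (2 * sqrt t)\<^sup>2)) * (2 * (inverse (sqrt t) / 2)) / 2 = 0"
    proof -
      have e1: "(2 * sqrt t)\<^sup>2 = 4 * t" using t by (simp add: power_mult_distrib)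
      have "inverse (sqrt t) / 2 * Ss t + sqrt t * (\<Sum>n. diffs dd n * t^n)
          = (2 * t * (\<Sum>n. diffs dd n * t^n) + Ss t) / (2 * sqrt t)"
        using st st2 by (simp add: field_simps)
      also have "\<dots> = 1 / sqrt (1 - 4*t) / (2 * sqrt t)" unfolding ode ..
      finally have A: "inverse (sqrt t) / 2 * Ss t + sqrt t * (\<Sum>n. diffs dd n * t^n)
          = 1 / sqrt (1 - 4*t) / (2 * sqrt t)" .
      have B: "inverse (sqrt (1 - (2 * sqrt t)\<^sup>2)) * (2 * (inverse (sqrt t) / 2)) / 2
          = 1 / sqrt (1 - 4*t) / (2 * sqrt t)" unfolding e1 by (simp add: field_simps)
      show ?thesis unfolding A B by simp
    qed
    finally show "DERIV D t :> 0" .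
  qed
  hence "sqrt x * Ss x - arcsin (2 * sqrt x) / 2 = 0" by (simp add: D_def)
  moreover have "sqrt x > 0" using x by simp
  ultimately show ?thesis unfolding Ss_def[symmetric] by (simp add: field_simps)
qed

lemma alg3: fixes a b :: real assumes "a > 0" "b > 0"
  shows "(- inverse a - 2 * inverse b) / (2 * a + b) = - (1 / (a * b))"
proof -
  have "2 * a + b > 0" using assms by simp
  hence "(- inverse a - 2 * inverse b) = - (1 / (a * b)) * (2 * a + b)"
    using assms by (simp add: field_simps)
  thus ?thesis using \<open>2 * a + b > 0\<close> by simp
qed

lemma Ss_neg: assumes x: "-1/4 < x" "x < 0"
  shows "(\<Sum>n. dd n * x^n) = ln (2 * sqrt (-x) + sqrt (1 - 4*x)) / (2 * sqrt (-x))"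
proof -
  define Ss where "Ss t = (\<Sum>n. dd n * t^n)" for t
  define D where "D t = sqrt (-t) * Ss t - ln (2 * sqrt (-t) + sqrt (1 - 4*t)) / 2" for t
  have "D 0 = D x"
  proof (rule DERIV_isconst_end[OF x(2)])
    have sub: "{x..0} \<subseteq> {-1/4<..<1/4}" using x by auto
    have c1: "continuous_on {x..0} Ss" unfolding Ss_def by (rule Ss_cont_on[OF sub])
    have b: "\<forall>t\<in>{x..0}. 2 * sqrt (-t) + sqrt (1 - 4*t) \<noteq> 0"
    proof
      fix t assume "t \<in> {x..0}"
      hence "t \<le> 0" by auto
      hence "sqrt (1 - 4*t) > 0" "sqrt (-t) \<ge> 0" by auto
      thus "2 * sqrt (-t) + sqrt (1 - 4*t) \<noteq> 0" by linarith
    qed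
    show "continuous_on {x..0} D" unfolding D_def
      by (intro continuous_intros c1 b) auto
  next
    fix t assume t: "x < t" "t < 0"
    have ta: "\<bar>t\<bar> < 1/4" using t x by auto
    have pos: "1 - 4*t > 0" using ta by auto
    have sp: "sqrt (1 - 4*t) > 0" using pos by simp
    have ss: "sqrt (1 - 4*t) * sqrt (1 - 4*t) = 1 - 4*t" using pos by simp
    have st: "sqrt (-t) > 0" using t by simp
    have st2: "sqrt (-t) * sqrt (-t) = -t" using t by simp
    have dS: "(Ss has_field_derivative (\<Sum>n. diffs dd n * t^n)) (at t)"
      unfolding Ss_def by (rule good_deriv[OF good_dd ta])
    have ode: "2 * t * (\<Sum>n. diffs dd n * t^n) + Ss t = 1 / sqrt (1 - 4*t)"
      using Ss_ode[OF ta] by (simp add: Ss_def)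
    have dsq: "((\<lambda>t. sqrt (-t)) has_field_derivative -(1 / (2 * sqrt (-t)))) (at t)"
      using t by (auto intro!: derivative_eq_intros simp: field_simps)
    have upos: "2 * sqrt (-t) + sqrt (1 - 4*t) > 0" using st sp by linarith
    have dln: "((\<lambda>t. ln (2 * sqrt (-t) + sqrt (1 - 4*t))) has_field_derivative
        -(1 / (sqrt (-t) * sqrt (1 - 4*t)))) (at t)"
      using t pos upos
      apply (auto intro!: derivative_eq_intros)
      using alg3[OF st sp] by simp
    have "(D has_field_derivative
       (-(1 / (2 * sqrt (-t))) * Ss t + (\<Sum>n. diffs dd n * t^n) * sqrt (-t)
        - (-(1 / (sqrt (-t) * sqrt (1 - 4*t)))) / 2)) (at t)"
      unfolding D_def by (rule DERIV_diff[OF DERIV_mult[OF dsq dS] DERIV_cdivide[OF dln]])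
    also have "-(1 / (2 * sqrt (-t))) * Ss t + (\<Sum>n. diffs dd n * t^n) * sqrt (-t)
        - (-(1 / (sqrt (-t) * sqrt (1 - 4*t)))) / 2 = 0"
    proof -
      have "-(1 / (2 * sqrt (-t))) * Ss t + (\<Sum>n. diffs dd n * t^n) * sqrt (-t)
          = (2 * (sqrt (-t) * sqrt (-t)) * (\<Sum>n. diffs dd n * t^n) - Ss t) / (2 * sqrt (-t))"
        using st by (simp add: field_simps del: real_sqrt_mult_self)
      also have "\<dots> = - (2 * t * (\<Sum>n. diffs dd n * t^n) + Ss t) / (2 * sqrt (-t))"
        unfolding st2 by (simp add: algebra_simps)
      also have "\<dots> = - (1 / sqrt (1 - 4*t)) / (2 * sqrt (-t))" unfolding ode ..
      finally have A: "-(1 / (2 * sqrt (-t))) * Ss t + (\<Sum>n. diffs dd n * t^n) * sqrt (-t)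
          = - (1 / sqrt (1 - 4*t)) / (2 * sqrt (-t))" .
      show ?thesis unfolding A by (simp add: field_simps)
    qed
    finally show "DERIV D t :> 0" .
  qed
  hence "sqrt (-x) * Ss x - ln (2 * sqrt (-x) + sqrt (1 - 4*x)) / 2 = 0" by (simp add: D_def)
  moreover have "sqrt (-x) > 0" using x by simp
  ultimately show ?thesis unfolding Ss_def[symmetric] by (simp add: field_simps)
qed

lemma asin_fun_Ss: assumes "\<bar>x\<bar> < 1/4" shows "(\<Sum>n. dd n * x^n) = asin_fun x"
proof -
  consider "x > 0" | "x = 0" | "x < 0" by linarith
  thus ?thesis
  proof cases
    case 1 thus ?thesis using Ss_pos[OF 1] assms by (simp add: asin_fun_def)
  next
    case 2
    have "(\<Sum>n. dd n * x^n) = dd 0" unfolding 2 by (rule powser_zero)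
    thus ?thesis using 2 by (simp add: asin_fun_def dd_def cc_def)
  next
    case 3
    have "-1/4 < x" using assms by auto
    thus ?thesis using Ss_neg[OF _ 3] 3 by (simp add: asin_fun_def)
  qed
qed

lemma main1: assumes x: "\<bar>x\<bar> < 1/4"
  shows "(\<lambda>n. real ((2*n) choose n) * harm (2*n+1) * x ^ n) sums
           (1 / sqrt (1 - 4*x) * ln ((1 + sqrt (1 - 4*x)) / (2 * (1 - 4*x))) + asin_fun x)"
proof -
  have "(\<lambda>n. aa n * x^n + dd n * x^n) sums ((\<Sum>n. aa n * x^n) + (\<Sum>n. dd n * x^n))"
    by (intro sums_add good_sums[OF good_aa x] good_sums[OF good_dd x])
  moreover have "(\<lambda>n. aa n * x^n + dd n * x^n) = (\<lambda>n. real ((2*n) choose n) * harm (2*n+1) * x ^ n)"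
  proof (rule ext)
    fix n
    have "harm (2*n+1) = harm (2*n) + 1 / (2 * real n + 1)"
      by (simp add: harm_Suc inverse_eq_divide)
    hence "aa n + dd n = cc n * harm (2*n+1)"
      unfolding aa_def dd_def by (simp only: distrib_left divide_inverse mult_1_left)
    hence "aa n * x^n + dd n * x^n = cc n * harm (2*n+1) * x^n"
      by (simp only: distrib_right[symmetric])
    thus "aa n * x^n + dd n * x^n = real ((2*n) choose n) * harm (2*n+1) * x ^ n"
      by (simp only: cc_def)
  qed
  ultimately have "(\<lambda>n. real ((2*n) choose n) * harm (2*n+1) * x ^ n) sums (GG x + asin_fun x)"
    by (simp only: Gs_closed[OF x] asin_fun_Ss[OF x])
  thus ?thesis unfolding GG_def .
qed

theorem theorem20:
  fixes x :: real
  assumes "\<bar>x\<bar> < 1/4"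
  shows "((\<lambda>n. real ((2*n) choose n) * harm (2*n+1) * x ^ n) sums
           (1 / sqrt (1 - 4*x) * ln ((1 + sqrt (1 - 4*x)) / (2 * (1 - 4*x))) + asin_fun x) \<and>
         (\<lambda>n. (-1) ^ n * real ((2*n) choose n) * harm (2*n+1) * x ^ n) sums
           (1 / sqrt (1 + 4*x) * ln ((1 + sqrt (1 + 4*x)) / (2 * (1 + 4*x))) + asinh_fun x))"
proof
  show "(\<lambda>n. real ((2*n) choose n) * harm (2*n+1) * x ^ n) sums
           (1 / sqrt (1 - 4*x) * ln ((1 + sqrt (1 - 4*x)) / (2 * (1 - 4*x))) + asin_fun x)"
    by (rule main1[OF assms])
  have m: "\<bar>-x\<bar> < 1/4" using assms by simp
  have e: "asin_fun (-x) = asinh_fun x"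
  proof (cases "x > 0")
    case True thus ?thesis unfolding asin_fun_def asinh_fun_def by simp
  next
    case False
    show ?thesis
    proof (cases "x = 0")
      case True thus ?thesis unfolding asin_fun_def asinh_fun_def by simp
    next
      case False
      hence "x < 0" using \<open>\<not> x > 0\<close> by linarith
      thus ?thesis unfolding asin_fun_def asinh_fun_def by simp
    qed
  qed
  have f: "(\<lambda>n. real ((2*n) choose n) * harm (2*n+1) * (-x) ^ n) =
        (\<lambda>n. (-1) ^ n * real ((2*n) choose n) * harm (2*n+1) * x ^ n)"
  proof (rule ext)
    fix n
    have "(-x) ^ n = (-1) ^ n * x ^ n" by (rule power_minus)
    thus "real ((2*n) choose n) * harm (2*n+1) * (-x) ^ n =
        (-1) ^ n * real ((2*n) choose n) * harm (2*n+1) * x ^ n"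
      by (simp only: mult.assoc mult.commute mult.left_commute)
  qed
  show "(\<lambda>n. (-1) ^ n * real ((2*n) choose n) * harm (2*n+1) * x ^ n) sums
           (1 / sqrt (1 + 4*x) * ln ((1 + sqrt (1 + 4*x)) / (2 * (1 + 4*x))) + asinh_fun x)"
  proof -
    have "1 - 4 * (-x) = 1 + 4 * x" by simp
    thus ?thesis using main1[OF m] unfolding f e by (simp only:)
  qed
qed

end
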